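(* A topological space $X$ has the property $\bigcup_{\mathrm{fin}}(\mathcal O,\Gamma)$ if and only if for every sequence $(u_n)_{n\in\omega}$ of open covers of $X$ there exists a sequence $(v_n)_{n\in\omega}$, each $v_n$ a finite subset of $u_n$, such that, letting $w=\{\cup v_n:n\in\omega\}$, the semifilter $\uparrow\{\mu_w(x):x\in X\}$ is meager.
   Context: For an indexed family $w=\{W_n:n\in\omega\}$ of subsets of $X$ let $\mu_w(x)=\{n\in\omega:x\in W_n\}$. $A\subset^\ast B$ means $A\setminus B$ is finite. For a family $\mathcal A$ of subsets of $\omega$, $\uparrow\mathcal A=\{B\subset\omega:\exists A\in\mathcal A\ (A\subset^\ast B)\}$; meager refers to $\mathcal P(\omega)$ identified with the Cantor space $\{0,1\}^\omega$. $w$ is a $\gamma$-cover of $X$ if $\mu_w(x)$ is cofinite in $\omega$ for every $x\in X$. $X$ has $\bigcup_{\mathrm{fin}}(\mathcal O,\Gamma)$ if for every sequence $(u_n)_{n\in\omega}$ of open covers of $X$ there are finite $v_n\subset u_n$ such that $\{\cup v_n:n\in\omega\}$ is a $\gamma$-cover of $X$. *)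

theory Defs
  imports "HOL-Analysis.Analysis"
begin

definition open_cover :: "'a topology \<Rightarrow> 'a set set \<Rightarrow> bool" where
  "open_cover X u \<longleftrightarrow> (\<forall>U\<in>u. openin X U) \<and> \<Union>u = topspace X"

definition mu :: "(nat \<Rightarrow> 'a set) \<Rightarrow> 'a \<Rightarrow> nat set" where
  "mu W x = {n. x \<in> W n}"

definition gamma_cover :: "'a topology \<Rightarrow> (nat \<Rightarrow> 'a set) \<Rightarrow> bool" where
  "gamma_cover X W \<longleftrightarrow> (\<forall>x\<in>topspace X. finite (UNIV - mu W x))"

definition Ufin_O_Gamma :: "'a topology \<Rightarrow> bool" where
  "Ufin_O_Gamma X \<longleftrightarrow>
     (\<forall>u :: nat \<Rightarrow> 'a set set. (\<forall>n. open_cover X (u n)) \<longrightarrow>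
        (\<exists>v. (\<forall>n. finite (v n) \<and> v n \<subseteq> u n) \<and> gamma_cover X (\<lambda>n. \<Union>(v n))))"

definition upclose :: "nat set set \<Rightarrow> nat set set" where
  "upclose \<A> = {B. \<exists>A\<in>\<A>. finite (A - B)}"

definition cantor_top :: "(nat \<Rightarrow> bool) topology" where
  "cantor_top = product_topology (\<lambda>_. discrete_topology (UNIV :: bool set)) UNIV"

definition nowhere_dense_in :: "'a topology \<Rightarrow> 'a set \<Rightarrow> bool" where
  "nowhere_dense_in T N \<longleftrightarrow> N \<subseteq> topspace T \<and> T interior_of (T closure_of N) = {}"

definition meager_in :: "'a topology \<Rightarrow> 'a set \<Rightarrow> bool" where
  "meager_in T S \<longleftrightarrow> (\<exists>F. countable F \<and> (\<forall>N\<in>F. nowhere_dense_in T N) \<and> S \<subseteq> \<Union>F)"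

text \<open>A family of subsets of omega is meager when its image under the identification
  P(omega) = {0,1}^omega (A maps to its characteristic function) is meager.\<close>
definition meager_fam :: "nat set set \<Rightarrow> bool" where
  "meager_fam \<A> \<longleftrightarrow> meager_in cantor_top ((\<lambda>A n. n \<in> A) ` \<A>)"

end

theory Submission imports Defs begin

definition cyl :: "(nat \<Rightarrow> bool) \<Rightarrow> nat \<Rightarrow> (nat \<Rightarrow> bool) set" where
  "cyl y L = {z. \<forall>i<L. z i = y i}"

lemma topspace_cantor[simp]: "topspace cantor_top = UNIV"
  unfolding cantor_top_def by (simp only: topspace_product_topology topspace_discrete_topology PiE_UNIV)

lemma openin_cantor_alt: "openin cantor_top S \<longleftrightarrow> (\<forall>x\<in>S. \<exists>U. finite {i. U i \<noteq> UNIV} \<and> x \<in> Pi UNIV U \<and> Pi UNIV U \<subseteq> S)"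
  unfolding cantor_top_def openin_product_topology_alt
  by (simp only: topspace_discrete_topology openin_discrete_topology subset_UNIV PiE_UNIV_domain
      ball_UNIV simp_thms UNIV_I mem_Collect_eq)

lemma openin_cantor:
  "openin cantor_top S \<longleftrightarrow> (\<forall>x\<in>S. \<exists>L. cyl x L \<subseteq> S)"
proof
  assume "openin cantor_top S"
  then have H: "\<forall>x\<in>S. \<exists>U. finite {i. U i \<noteq> UNIV} \<and> x \<in> Pi UNIV U \<and> Pi UNIV U \<subseteq> S"
    unfolding openin_cantor_alt by blast
  show "\<forall>x\<in>S. \<exists>L. cyl x L \<subseteq> S"
  proof
    fix x assume "x \<in> S"
    with H obtain U where U: "finite {i. U i \<noteq> UNIV}" "x \<in> Pi UNIV U" "Pi UNIV U \<subseteq> S" by blast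
    obtain L where L: "{i. U i \<noteq> UNIV} \<subseteq> {..<L}" using finite_nat_bounded[OF U(1)] by blast
    have "cyl x L \<subseteq> Pi UNIV U"
    proof
      fix z assume z: "z \<in> cyl x L"
      show "z \<in> Pi UNIV U"
      proof (rule Pi_I)
        fix i
        show "z i \<in> U i"
        proof (cases "U i = UNIV")
          case False
          then have "i < L" using L by blast
          then have "z i = x i" using z unfolding cyl_def by simp
          moreover have "x i \<in> U i" using U(2) by (metis PiE UNIV_I)
          ultimately show ?thesis by simp
        qed simp
      qed
    qed
    then show "\<exists>L. cyl x L \<subseteq> S" using U(3) by blast
  qed
next
  assume H: "\<forall>x\<in>S. \<exists>L. cyl x L \<subseteq> S"
  show "openin cantor_top S"
    unfolding openin_cantor_alt
  proof (intro ballI)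
    fix x assume "x \<in> S"
    with H obtain L where L: "cyl x L \<subseteq> S" by blast
    define U where "U i = (if i < L then {x i} else UNIV)" for i
    have "{i. U i \<noteq> UNIV} \<subseteq> {..<L}"
    proof
      fix i assume i: "i \<in> {i. U i \<noteq> UNIV}"
      show "i \<in> {..<L}"
      proof (rule ccontr)
        assume "i \<notin> {..<L}"
        then have "U i = UNIV" unfolding U_def by simp
        then show False using i by simp
      qed
    qed
    then have "finite {i. U i \<noteq> UNIV}" by (rule finite_subset) simp
    moreover have "x \<in> Pi UNIV U"
    proof (rule Pi_I)
      fix i show "x i \<in> U i" unfolding U_def by simp
    qed
    moreover have "Pi UNIV U \<subseteq> S"
    proof
      fix z assume z: "z \<in> Pi UNIV U"
      have "z \<in> cyl x L" unfolding cyl_def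
      proof (intro CollectI allI impI)
        fix i assume "i < L"
        then have "U i = {x i}" unfolding U_def by simp
        then show "z i = x i" using z by (metis PiE UNIV_I singletonD)
      qed
      then show "z \<in> S" using L by blast
    qed
    ultimately show "\<exists>U. finite {i. U i \<noteq> UNIV} \<and> x \<in> Pi UNIV U \<and> Pi UNIV U \<subseteq> S" by blast
  qed
qed

lemma cyl_mono: "L1 \<le> L2 \<Longrightarrow> cyl y L2 \<subseteq> cyl y L1"
  by (auto simp: cyl_def)

lemma openin_cyl: "openin cantor_top (cyl y L)"
  unfolding openin_cantor
proof
  fix x assume "x \<in> cyl y L"
  then have "cyl x L \<subseteq> cyl y L" by (auto simp: cyl_def)
  then show "\<exists>L'. cyl x L' \<subseteq> cyl y L" by blast
qed

lemma nowhere_dense_ext: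
  assumes "nowhere_dense_in cantor_top N"
  shows "\<exists>z L'. L' \<ge> L \<and> z \<in> cyl y L \<and> cyl z L' \<inter> N = {}"
proof -
  let ?C = "cantor_top closure_of N"
  have "cantor_top interior_of ?C = {}" using assms unfolding nowhere_dense_in_def by blast
  moreover have "y \<in> cyl y L" by (simp add: cyl_def)
  ultimately have "cyl y L - ?C \<noteq> {}"
    unfolding interior_of_eq_empty_alt using openin_cyl[of y L] by blast
  then obtain z where z: "z \<in> cyl y L" "z \<notin> ?C" by blast
  have "openin cantor_top (cyl y L - ?C)"
    using openin_cyl by (intro openin_diff) auto
  then obtain L0 where L0: "cyl z L0 \<subseteq> cyl y L - ?C" using z unfolding openin_cantor by blast
  have "cyl z (max L L0) \<subseteq> cyl z L0" by (rule cyl_mono) simp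
  moreover have "N \<subseteq> ?C" using assms unfolding nowhere_dense_in_def
    by (simp add: closure_of_subset)
  ultimately have "cyl z (max L L0) \<inter> N = {}" using L0 by blast
  then show ?thesis using z by (intro exI[of _ z] exI[of _ "max L L0"]) auto
qed

lemma singleton_nowhere_dense: "nowhere_dense_in cantor_top {c}"
proof -
  have cl: "cantor_top closure_of {c} \<subseteq> {c}"
  proof
    fix w assume w: "w \<in> cantor_top closure_of {c}"
    show "w \<in> {c}"
    proof (rule ccontr)
      assume "w \<notin> {c}"
      then obtain i where "w i \<noteq> c i" by auto
      then have "c \<notin> cyl w (Suc i)" by (auto simp: cyl_def)
      moreover have "w \<in> cyl w (Suc i)" by (simp add: cyl_def)
      ultimately show False using w openin_cyl[of w "Suc i"] unfolding in_closure_of by blast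
    qed
  qed
  have "cantor_top interior_of {c} = {}"
    unfolding interior_of_eq_empty
  proof (intro allI impI)
    fix T assume T: "openin cantor_top T \<and> T \<subseteq> {c}"
    show "T = {}"
    proof (rule ccontr)
      assume "T \<noteq> {}"
      then have "c \<in> T" using T by blast
      then obtain L where L: "cyl c L \<subseteq> T" using T unfolding openin_cantor by blast
      have "c(L := \<not> c L) \<in> cyl c L" by (simp add: cyl_def)
      then have "c(L := \<not> c L) = c" using L T by blast
      then show False by (metis fun_upd_same)
    qed
  qed
  then have "cantor_top interior_of (cantor_top closure_of {c}) = {}"
    using cl by (metis interior_of_mono subset_empty)
  then show ?thesis unfolding nowhere_dense_in_def by simp
qed

lemma countable_meager: "countable S \<Longrightarrow> meager_in cantor_top S"
  unfolding meager_in_def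
  by (intro exI[of _ "(\<lambda>c. {c}) ` S"]) (auto simp: singleton_nowhere_dense)


definition mrg :: "(nat \<Rightarrow> bool) \<Rightarrow> (nat \<Rightarrow> bool) \<Rightarrow> nat \<Rightarrow> nat \<Rightarrow> bool" where
  "mrg s t n = (\<lambda>i. if i < n then s i else t i)"

lemma ext_finite:
  fixes N :: "nat \<Rightarrow> (nat \<Rightarrow> bool) set"
  assumes nd: "\<And>m. nowhere_dense_in cantor_top (N m)"
    and fin: "finite P"
  shows "\<exists>t n'. n' > n \<and> (\<forall>(s,m)\<in>P. cyl (mrg s t n) n' \<inter> N m = {})"
  using fin
proof (induction P rule: finite_induct)
  case empty
  then show ?case by (intro exI[of _ "\<lambda>_. False"] exI[of _ "Suc n"]) auto
next
  case (insert p P)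
  obtain s m where p: "p = (s, m)" by (cases p)
  from insert.IH obtain t n' where tn: "n' > n" "\<forall>(s,m)\<in>P. cyl (mrg s t n) n' \<inter> N m = {}"
    by blast
  obtain z L' where zL: "L' \<ge> n'" "z \<in> cyl (mrg s t n) n'" "cyl z L' \<inter> N m = {}"
    using nowhere_dense_ext[OF nd[of m], of n' "mrg s t n"] by blast
  have old: "cyl (mrg s0 z n) L' \<subseteq> cyl (mrg s0 t n) n'" for s0
    using zL(1,2) tn(1) unfolding cyl_def mrg_def by auto
  have new: "cyl (mrg s z n) L' = cyl z L'"
    using zL(1,2) tn(1) unfolding cyl_def mrg_def by auto
  show ?case
  proof (intro exI[of _ z] exI[of _ L'] conjI)
    show "L' > n" using zL(1) tn(1) by simp
    show "\<forall>(s, m)\<in>insert p P. cyl (mrg s z n) L' \<inter> N m = {}"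
    proof
      fix q assume "q \<in> insert p P"
      then show "case q of (s, m) \<Rightarrow> cyl (mrg s z n) L' \<inter> N m = {}"
      proof
        assume "q = p" then show ?thesis using p new zL(3) by simp
      next
        assume "q \<in> P" then show ?thesis using tn(2) old by fastforce
      qed
    qed
  qed
qed

lemma step_exists:
  fixes N :: "nat \<Rightarrow> (nat \<Rightarrow> bool) set"
  assumes nd: "\<And>m. nowhere_dense_in cantor_top (N m)"
  shows "\<exists>t n'. n' > n \<and> (\<forall>y. (\<forall>i. n \<le> i \<and> i < n' \<longrightarrow> y i = t i) \<longrightarrow> (\<forall>m\<le>k. y \<notin> N m))"
proof -
  let ?S = "{s :: nat \<Rightarrow> bool. \<forall>i\<ge>n. \<not> s i}"
  have "?S \<subseteq> (\<lambda>A i. i \<in> A) ` Pow {..<n}"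
  proof
    fix s assume s: "s \<in> ?S"
    have "s = (\<lambda>i. i \<in> {i. s i})" by simp
    moreover have "{i. s i} \<in> Pow {..<n}" using s by (auto simp: not_le[symmetric])
    ultimately show "s \<in> (\<lambda>A i. i \<in> A) ` Pow {..<n}" by blast
  qed
  then have "finite ?S" by (rule finite_subset) simp
  then have "finite (?S \<times> {..k})" by (intro finite_cartesian_product) auto
  from ext_finite[of N, OF nd this, of n] obtain t n' where tn:
    "n' > n" "\<forall>(s,m)\<in>?S \<times> {..k}. cyl (mrg s t n) n' \<inter> N m = {}" by blast
  show ?thesis
  proof (intro exI[of _ t] exI[of _ n'] conjI allI impI)
    show "n' > n" by fact
    fix y m assume y: "\<forall>i. n \<le> i \<and> i < n' \<longrightarrow> y i = t i" and m: "m \<le> k"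
    let ?s = "\<lambda>i. i < n \<and> y i"
    have "?s \<in> ?S" by auto
    then have "cyl (mrg ?s t n) n' \<inter> N m = {}" using tn(2) m by auto
    moreover have "y \<in> cyl (mrg ?s t n) n'" using y unfolding cyl_def mrg_def by auto
    ultimately show "y \<notin> N m" by blast
  qed
qed

primrec seqn :: "(nat \<Rightarrow> nat \<Rightarrow> 'b \<times> nat) \<Rightarrow> nat \<Rightarrow> nat" where
  "seqn G 0 = 0"
| "seqn G (Suc k) = snd (G (seqn G k) k)"

lemma interval_unique:
  assumes "strict_mono (nn :: nat \<Rightarrow> nat)" "nn k \<le> i" "i < nn (Suc k)" "nn j \<le> i" "i < nn (Suc j)"
  shows "j = k"
proof (rule ccontr)
  assume "j \<noteq> k"
  then have "Suc j \<le> k \<or> Suc k \<le> j" by auto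
  then show False
    using assms strict_mono_less_eq[OF assms(1)] by (meson le_trans not_le)
qed

lemma meager_partition:
  assumes "meager_fam (upclose M)"
  shows "\<exists>nn. strict_mono nn \<and> (\<forall>A\<in>M. finite {k. \<not>(\<exists>i\<in>A. nn k \<le> i \<and> i < nn (Suc k))})"
proof -
  from assms obtain F where F: "countable F" "\<forall>N\<in>F. nowhere_dense_in cantor_top N"
    "(\<lambda>A n. n \<in> A) ` upclose M \<subseteq> \<Union>F"
    unfolding meager_fam_def meager_in_def by blast
  have Mup: "M \<subseteq> upclose M"
  proof
    fix A assume "A \<in> M" then show "A \<in> upclose M" unfolding upclose_def by (intro CollectI bexI[of _ A]) auto
  qed
  show ?thesis
  proof (cases "F = {}")
    case True
    then have "M = {}" using F(3) Mup by auto
    then show ?thesis by (intro exI[of _ id]) (auto simp: strict_mono_def)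
  next
    case False
    define N where "N = from_nat_into F"
    have rN: "range N = F" unfolding N_def using False F(1) by simp
    have nd: "\<And>m. nowhere_dense_in cantor_top (N m)" using F(2) rN by blast
    have "\<forall>n k. \<exists>p. snd p > n \<and> (\<forall>y. (\<forall>i. n \<le> i \<and> i < snd p \<longrightarrow> y i = fst p i) \<longrightarrow> (\<forall>m\<le>k. y \<notin> N m))"
      using step_exists[OF nd] by fastforce
    then obtain G where G: "\<And>n k. snd (G n k) > n \<and> (\<forall>y. (\<forall>i. n \<le> i \<and> i < snd (G n k) \<longrightarrow> y i = fst (G n k) i) \<longrightarrow> (\<forall>m\<le>k. y \<notin> N m))"
      by metis
    define nn where "nn = seqn G"
    have sm: "strict_mono nn" unfolding strict_mono_Suc_iff nn_def using G by simp
    have Gk: "\<And>k y m. (\<forall>i. nn k \<le> i \<and> i < nn (Suc k) \<longrightarrow> y i = fst (G (nn k) k) i) \<Longrightarrow> m \<le> k \<Longrightarrow> y \<notin> N m"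
      unfolding nn_def using G by simp
    show ?thesis
    proof (intro exI[of _ nn] conjI ballI sm)
      fix A assume A: "A \<in> M"
      define J where "J = {k. \<not>(\<exists>i\<in>A. nn k \<le> i \<and> i < nn (Suc k))}"
      show "finite J"
      proof (rule ccontr)
        assume inf: "infinite J"
        define A' where "A' = {i. i \<in> A \<or> (\<exists>k\<in>J. nn k \<le> i \<and> i < nn (Suc k) \<and> fst (G (nn k) k) i)}"
        have "A - A' = {}" unfolding A'_def by blast
        then have "finite (A - A')" by (metis finite.emptyI)
        then have "A' \<in> upclose M" unfolding upclose_def using A by blast
        then have "(\<lambda>n. n \<in> A') \<in> \<Union>F" using F(3) by blast
        then obtain m where m: "(\<lambda>n. n \<in> A') \<in> N m" using rN by blast
        obtain k where k: "k \<in> J" "m \<le> k" using inf unfolding infinite_nat_iff_unbounded_le by blast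
        have "\<forall>i. nn k \<le> i \<and> i < nn (Suc k) \<longrightarrow> (i \<in> A') = fst (G (nn k) k) i"
        proof (intro allI impI)
          fix i assume i: "nn k \<le> i \<and> i < nn (Suc k)"
          then have "i \<notin> A" using k(1) unfolding J_def by blast
          then show "(i \<in> A') = fst (G (nn k) k) i"
            unfolding A'_def using i k(1) interval_unique[OF sm] by blast
        qed
        then show False using Gk[of k "\<lambda>n. n \<in> A'" m] m k(2) by blast
      qed
    qed
  qed
qed



lemma cofinite_meager:
  assumes "\<forall>A\<in>M. finite (UNIV - A)"
  shows "meager_fam (upclose M)"
proof -
  let ?C = "{B :: nat set. finite (UNIV - B)}"
  have "upclose M \<subseteq> ?C"
  proof
    fix B assume "B \<in> upclose M"
    then obtain A where A: "A \<in> M" "finite (A - B)" unfolding upclose_def by blast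
    have "UNIV - B \<subseteq> (UNIV - A) \<union> (A - B)" by blast
    moreover have "finite ((UNIV - A) \<union> (A - B))" using A assms by blast
    ultimately have "finite (UNIV - B)" by (rule finite_subset)
    then show "B \<in> ?C" by simp
  qed
  moreover have "?C \<subseteq> (\<lambda>F. UNIV - F) ` Collect finite"
  proof
    fix B assume "B \<in> ?C" then show "B \<in> (\<lambda>F. UNIV - F) ` Collect finite"
      by (intro image_eqI[of _ _ "UNIV - B"]) auto
  qed
  ultimately have sub: "upclose M \<subseteq> (\<lambda>F. UNIV - F) ` Collect finite" by (rule subset_trans)
  have "countable ((\<lambda>F::nat set. UNIV - F) ` Collect finite)"
    using countable_Collect_finite by (rule countable_image)
  then have "countable (upclose M)" using sub by (rule countable_subset[rotated])
  then have "countable ((\<lambda>A n. n \<in> A) ` upclose M)" by (rule countable_image)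
  then show ?thesis unfolding meager_fam_def by (rule countable_meager)
qed

theorem proposition9:
  fixes X :: "'a topology"
  shows "Ufin_O_Gamma X \<longleftrightarrow>
    (\<forall>u :: nat \<Rightarrow> 'a set set. (\<forall>n. open_cover X (u n)) \<longrightarrow>
       (\<exists>v. (\<forall>n. finite (v n) \<and> v n \<subseteq> u n) \<and>
            meager_fam (upclose ((\<lambda>x. mu (\<lambda>n. \<Union>(v n)) x) ` topspace X))))"
proof
  assume H: "Ufin_O_Gamma X"
  show "\<forall>u :: nat \<Rightarrow> 'a set set. (\<forall>n. open_cover X (u n)) \<longrightarrow>
       (\<exists>v. (\<forall>n. finite (v n) \<and> v n \<subseteq> u n) \<and>
            meager_fam (upclose ((\<lambda>x. mu (\<lambda>n. \<Union>(v n)) x) ` topspace X)))"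
  proof (intro allI impI)
    fix u :: "nat \<Rightarrow> 'a set set" assume "\<forall>n. open_cover X (u n)"
    with H obtain v where v: "\<forall>n. finite (v n) \<and> v n \<subseteq> u n" "gamma_cover X (\<lambda>n. \<Union>(v n))"
      unfolding Ufin_O_Gamma_def by blast
    have "meager_fam (upclose ((\<lambda>x. mu (\<lambda>n. \<Union>(v n)) x) ` topspace X))"
      using v(2) unfolding gamma_cover_def by (intro cofinite_meager) auto
    with v(1) show "\<exists>v. (\<forall>n. finite (v n) \<and> v n \<subseteq> u n) \<and>
            meager_fam (upclose ((\<lambda>x. mu (\<lambda>n. \<Union>(v n)) x) ` topspace X))" by blast
  qed
next
  assume H: "\<forall>u :: nat \<Rightarrow> 'a set set. (\<forall>n. open_cover X (u n)) \<longrightarrow>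
       (\<exists>v. (\<forall>n. finite (v n) \<and> v n \<subseteq> u n) \<and>
            meager_fam (upclose ((\<lambda>x. mu (\<lambda>n. \<Union>(v n)) x) ` topspace X)))"
  show "Ufin_O_Gamma X"
    unfolding Ufin_O_Gamma_def
  proof (intro allI impI)
    fix u :: "nat \<Rightarrow> 'a set set" assume u: "\<forall>n. open_cover X (u n)"
    define u' where "u' n = {\<Inter>i\<in>{..n}. f i | f. \<forall>i\<le>n. f i \<in> u i}" for n
    have u'cov: "open_cover X (u' n)" for n
      unfolding open_cover_def
    proof
      show "\<forall>U\<in>u' n. openin X U"
      proof
        fix U assume "U \<in> u' n"
        then obtain f where f: "U = (\<Inter>i\<in>{..n}. f i)" "\<forall>i\<le>n. f i \<in> u i" unfolding u'_def by blast
        have "openin X (f i)" if "i \<le> n" for i using u f(2) that unfolding open_cover_def by blast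
        then show "openin X U" unfolding f(1) by (intro openin_Inter) auto
      qed
      show "\<Union>(u' n) = topspace X"
      proof
        show "\<Union>(u' n) \<subseteq> topspace X"
        proof
          fix x assume "x \<in> \<Union>(u' n)"
          then obtain f where f: "x \<in> (\<Inter>i\<in>{..n}. f i)" "\<forall>i\<le>n. f i \<in> u i" unfolding u'_def by blast
          then have "x \<in> f 0" by auto
          moreover have "f 0 \<in> u 0" using f(2) by simp
          ultimately show "x \<in> topspace X" using u unfolding open_cover_def by blast
        qed
        show "topspace X \<subseteq> \<Union>(u' n)"
        proof
          fix x assume x: "x \<in> topspace X"
          have "\<forall>i. \<exists>U. U \<in> u i \<and> x \<in> U" using u x unfolding open_cover_def by blast
          then obtain f where f: "\<And>i. f i \<in> u i \<and> x \<in> f i" by metis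
          have "(\<Inter>i\<in>{..n}. f i) \<in> u' n" unfolding u'_def using f by blast
          moreover have "x \<in> (\<Inter>i\<in>{..n}. f i)" using f by blast
          ultimately show "x \<in> \<Union>(u' n)" by blast
        qed
      qed
    qed
    have refine: "\<exists>U. U \<in> u i \<and> V \<subseteq> U" if "V \<in> u' n" "i \<le> n" for V n i
    proof -
      from that obtain f where f: "V = (\<Inter>i\<in>{..n}. f i)" "\<forall>i\<le>n. f i \<in> u i" unfolding u'_def by blast
      then show ?thesis using that(2) by (intro exI[of _ "f i"]) auto
    qed
    from H u'cov obtain v where v: "\<forall>n. finite (v n) \<and> v n \<subseteq> u' n"
      "meager_fam (upclose ((\<lambda>x. mu (\<lambda>n. \<Union>(v n)) x) ` topspace X))" by blast
    from meager_partition[OF v(2)] obtain nn where nn: "strict_mono nn"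
      "\<forall>A\<in>(\<lambda>x. mu (\<lambda>n. \<Union>(v n)) x) ` topspace X. finite {k. \<not>(\<exists>i\<in>A. nn k \<le> i \<and> i < nn (Suc k))}"
      by blast
    define ch where "ch k V = (SOME U. U \<in> u k \<and> V \<subseteq> U)" for k V
    have ch: "ch k V \<in> u k \<and> V \<subseteq> ch k V" if "V \<in> v n" "k \<le> n" for k n V
    proof -
      have "V \<in> u' n" using that(1) v(1) by blast
      then have "\<exists>U. U \<in> u k \<and> V \<subseteq> U" using refine[of V n k] that(2) by blast
      then show ?thesis unfolding ch_def by (rule someI_ex)
    qed
    define w where "w k = (\<Union>n\<in>{nn k..<nn (Suc k)}. ch k ` v n)" for k
    show "\<exists>v. (\<forall>n. finite (v n) \<and> v n \<subseteq> u n) \<and> gamma_cover X (\<lambda>n. \<Union>(v n))"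
    proof (intro exI[of _ w] conjI allI)
      fix k
      show "finite (w k)" unfolding w_def by (rule finite_UN_I) (simp_all add: v(1))
      show "w k \<subseteq> u k"
      proof
        fix U assume "U \<in> w k"
        then obtain n where n: "n \<in> {nn k..<nn (Suc k)}" "U \<in> ch k ` v n" unfolding w_def by blast
        then obtain V where V: "V \<in> v n" "U = ch k V" by blast
        have nV: "nn k \<le> n" "V \<in> v n" "U = ch k V" using n(1) V by simp_all
        have "k \<le> n" using seq_suble[OF nn(1), of k] nV(1) by simp
        then show "U \<in> u k" using ch[OF nV(2)] nV(3) by blast
      qed
    next
      show "gamma_cover X (\<lambda>n. \<Union>(w n))"
        unfolding gamma_cover_def
      proof
        fix x assume x: "x \<in> topspace X"
        let ?B = "{k. \<not>(\<exists>i\<in>mu (\<lambda>n. \<Union>(v n)) x. nn k \<le> i \<and> i < nn (Suc k))}"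
        have "finite ?B" using nn(2) x by blast
        moreover have "UNIV - mu (\<lambda>n. \<Union>(w n)) x \<subseteq> ?B"
        proof
          fix k assume k: "k \<in> UNIV - mu (\<lambda>n. \<Union>(w n)) x"
          show "k \<in> ?B"
          proof (rule ccontr)
            assume "k \<notin> ?B"
            then obtain n where n: "nn k \<le> n" "n < nn (Suc k)" "x \<in> \<Union>(v n)"
              unfolding mu_def by auto
            then obtain V where V: "V \<in> v n" "x \<in> V" by blast
            have "k \<le> n" using seq_suble[OF nn(1), of k] n(1) by simp
            then have c: "ch k V \<in> u k \<and> V \<subseteq> ch k V" using ch[OF V(1)] by blast
            have "ch k V \<in> w k" unfolding w_def
              by (rule UN_I[of n]) (use n(1,2) V(1) in auto)
            moreover have "x \<in> ch k V" using c V(2) by blast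
            ultimately have "x \<in> \<Union>(w k)" by blast
            then show False using k unfolding mu_def by simp
          qed
        qed
        ultimately show "finite (UNIV - mu (\<lambda>n. \<Union>(w n)) x)" by (rule finite_subset[rotated])
      qed
    qed
  qed
qed

end
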